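(* Let $F\in\mathbb{R}^{n\times n}$, $L\in\mathbb{R}^{n\times m}$, and let $\Sigma\in\mathbb{R}^{m\times m}$ be symmetric positive definite with symmetric square root $\Sigma^{1/2}$. Let $\alpha>0$ and $\bar v>0$, and set $\bar\omega=\alpha+\bar v$. Suppose there exist a symmetric positive definite matrix $\mathcal{P}\in\mathbb{R}^{n\times n}$ and a scalar $b\in(0,1)$ such that $$\begin{bmatrix} b\mathcal{P} & F^T \mathcal{P} & 0 & 0 & 0 & 0\\ \mathcal{P} F & \mathcal{P} & \mathcal{P} & -\mathcal{P} L \Sigma^{1/2} & 0 & 0\\ 0 & \mathcal{P} & \tfrac{1-b}{\bar{\omega}}I & 0 & 0 & 0\\ 0 & -\Sigma^{1/2}L^T \mathcal{P} & 0 & \tfrac{1-b}{\bar{\omega}}I & 0 & 0\\ 0 & 0 & 0 & 0 & I & 0\\ 0 & 0 & 0 & 0 & 0 & I \end{bmatrix}\succeq 0 .$$ Then every trajectory of $$e_{k+1}=Fe_k-L\Sigma^{1/2}\zeta_k+v_k,\qquad e_1=0,\quad k\in\mathbb{N},$$ driven by arbitrary sequences $\zeta_k\in\mathbb{R}^m$, $v_k\in\mathbb{R}^n$ with $\|\zeta_k\|^2\le\alpha$ and $\|v_k\|^2\le\bar v$ for all $k$, satisfies $e_k^T\mathcal{P}e_k\le 1$ for all $k\in\mathbb{N}$. In other words, the set $\mathcal{R}$ of all such reachable $e_k$ is contained in the ellipsoid $\{e\in\mathbb{R}^n : e^T\mathcal{P}e\le 1\}$.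
   Context: Setting: an estimation-error system $e_{k+1}=(F-LC)e_k-L\eta_k-L\delta_k+v_k$ with residual $r_k=Ce_k+\eta_k+\delta_k$, where $\eta_k$ is sensor noise, $v_k$ process noise and $\delta_k$ an additive sensor attack. It is rewritten in terms of the normalized residual $\zeta_k:=\Sigma^{-1/2}(Ce_k+\eta_k+\delta_k)$ as $e_{k+1}=Fe_k-L\Sigma^{1/2}\zeta_k+v_k$. A chi-squared detector with threshold $\alpha$ raises an alarm when $\|\zeta_k\|^2>\alpha$. In the paper, $\bar v$ is chosen so that $\Pr[\|v_k\|^2\le\bar v]=1-\mathcal{A}$, with $\mathcal{A}$ the false alarm rate. The set $\mathcal{R}$ (called the $(1-\mathcal{A})$-probable hidden reachable set) is then the set of states reachable from $e_1=0$ when $\|\zeta_k\|^2\le\alpha$ and $\|v_k\|^2\le\bar v$. The matrix inequality $\succeq 0$ means positive semidefinite. *)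

theory Defs
  imports "HOL-Analysis.Analysis"
begin

definition psd :: "real^'n^'n \<Rightarrow> bool" where
  "psd M \<longleftrightarrow> transpose M = M \<and> (\<forall>x. 0 \<le> x \<bullet> (M *v x))"

definition posdef :: "real^'n^'n \<Rightarrow> bool" where
  "posdef M \<longleftrightarrow> transpose M = M \<and> (\<forall>x. x \<noteq> 0 \<longrightarrow> 0 < x \<bullet> (M *v x))"

text \<open>The 6x6 block matrix of the LMI. Block index sets: 'n, 'n, 'n, 'm, 'p, 'q
(the last two identity blocks have unspecified size).
Arguments: F, L, Sh (= Sigma^(1/2)), P, b, w (= omega bar).\<close>
definition lmi_mat ::
  "real^'n::finite^'n \<Rightarrow> real^'m::finite^'n \<Rightarrow> real^'m^'m \<Rightarrow> real^'n^'n \<Rightarrow> real \<Rightarrow> real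
   \<Rightarrow> real^('n + 'n + 'n + 'm + 'p::finite + 'q::finite)^('n + 'n + 'n + 'm + 'p + 'q)" where
  "lmi_mat F L Sh P b w = (\<chi> i j.
     (case i of
        Inl a \<Rightarrow> (case j of
            Inl c \<Rightarrow> b * P $ a $ c
          | Inr (Inl c) \<Rightarrow> (transpose F ** P) $ a $ c
          | _ \<Rightarrow> 0)
      | Inr (Inl a) \<Rightarrow> (case j of
            Inl c \<Rightarrow> (P ** F) $ a $ c
          | Inr (Inl c) \<Rightarrow> P $ a $ c
          | Inr (Inr (Inl c)) \<Rightarrow> P $ a $ c
          | Inr (Inr (Inr (Inl c))) \<Rightarrow> - (P ** L ** Sh) $ a $ c
          | _ \<Rightarrow> 0)
      | Inr (Inr (Inl a)) \<Rightarrow> (case j of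
            Inr (Inl c) \<Rightarrow> P $ a $ c
          | Inr (Inr (Inl c)) \<Rightarrow> ((1 - b) / w) * (mat 1 :: real^'n^'n) $ a $ c
          | _ \<Rightarrow> 0)
      | Inr (Inr (Inr (Inl a))) \<Rightarrow> (case j of
            Inr (Inl c) \<Rightarrow> - (Sh ** transpose L ** P) $ a $ c
          | Inr (Inr (Inr (Inl c))) \<Rightarrow> ((1 - b) / w) * (mat 1 :: real^'m^'m) $ a $ c
          | _ \<Rightarrow> 0)
      | Inr (Inr (Inr (Inr (Inl a)))) \<Rightarrow> (case j of
            Inr (Inr (Inr (Inr (Inl c)))) \<Rightarrow> (mat 1 :: real^'p^'p) $ a $ c
          | _ \<Rightarrow> 0)
      | Inr (Inr (Inr (Inr (Inr a)))) \<Rightarrow> (case j of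
            Inr (Inr (Inr (Inr (Inr c)))) \<Rightarrow> (mat 1 :: real^'q^'q) $ a $ c
          | _ \<Rightarrow> 0)))"

end

theory Submission imports Defs begin

lemma sum_UNIV_Plus:
  "(\<Sum>i\<in>(UNIV::('a::finite + 'b::finite) set). f i) = (\<Sum>a\<in>UNIV. f (Inl a)) + (\<Sum>c\<in>UNIV. f (Inr c))"
  using sum.Plus[of "UNIV::'a set" "UNIV::'b set" f] by (simp add: comp_def)

lemma delta_sum[simp]: fixes a :: "'a::finite" shows "(\<Sum>aa\<in>UNIV. (c::real) * (if a = aa then 1 else 0) * f aa) = c * f a"
proof -
  have "(\<Sum>aa\<in>UNIV. (c::real) * (if a = aa then 1 else 0) * f aa) = (\<Sum>aa\<in>UNIV. if a = aa then c * f aa else 0)"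
    by (rule sum.cong) auto
  also have "\<dots> = c * f a" by (subst sum.delta') auto
  finally show ?thesis .
qed

lemma dotT: "(u::real^'n::finite) \<bullet> ((A::real^'m::finite^'n) *v w) = (transpose A *v u) \<bullet> w"
  by (simp add: dot_lmul_matrix[symmetric])

lemma step:
  fixes F :: "real^'n::finite^'n" and L :: "real^'m::finite^'n" and Sh :: "real^'m^'m"
    and P :: "real^'n^'n" and b w :: real and e v :: "real^'n" and z :: "real^'m"
  assumes psd: "psd (lmi_mat F L Sh P b w
               :: real^('n + 'n + 'n + 'm + 'p::finite + 'q::finite)^('n + 'n + 'n + 'm + 'p + 'q))"
  assumes PT: "transpose P = P" and ShT: "transpose Sh = Sh"
  shows "(F *v e - (L ** Sh) *v z + v) \<bullet> (P *v (F *v e - (L ** Sh) *v z + v))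
     \<le> b * (e \<bullet> (P *v e)) + (1 - b) / w * (v \<bullet> v + z \<bullet> z)"
proof -
  define y where "y = F *v e - (L ** Sh) *v z + v"
  define x :: "real^('n + 'n + 'n + 'm + 'p + 'q)" where "x = (\<chi> i. case i of Inl a \<Rightarrow> e $ a
     | Inr (Inl a) \<Rightarrow> - y $ a | Inr (Inr (Inl a)) \<Rightarrow> v $ a | Inr (Inr (Inr (Inl a))) \<Rightarrow> z $ a | _ \<Rightarrow> 0)"
  define M where "M = (lmi_mat F L Sh P b w
               :: real^('n + 'n + 'n + 'm + 'p::finite + 'q::finite)^('n + 'n + 'n + 'm + 'p + 'q))"
  define c where "c = (1 - b) / w"
  have b1: "(M *v x) $ Inl a = (b *s (P *v e) - (transpose F ** P) *v y) $ a" for a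
    unfolding M_def lmi_mat_def x_def c_def
    by (simp add: matrix_vector_mult_def sum_UNIV_Plus sum_distrib_left sum_subtractf sum_negf algebra_simps)
  have b2: "(M *v x) $ Inr (Inl a) = ((P ** F) *v e - P *v y + P *v v - (P ** L ** Sh) *v z) $ a" for a
    unfolding M_def lmi_mat_def x_def
    by (simp add: matrix_vector_mult_def sum_UNIV_Plus sum_distrib_left sum_subtractf sum_negf algebra_simps)
  have b3: "(M *v x) $ Inr (Inr (Inl a)) = (- (P *v y) + c *s v) $ a" for a
    unfolding M_def lmi_mat_def x_def c_def[symmetric]
    by (simp add: matrix_vector_mult_def sum_UNIV_Plus sum_distrib_left sum_subtractf sum_negf mat_def)
  have b4: "(M *v x) $ Inr (Inr (Inr (Inl a))) = ((Sh ** transpose L ** P) *v y + c *s z) $ a" for a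
    unfolding M_def lmi_mat_def x_def c_def[symmetric]
    by (simp add: matrix_vector_mult_def sum_UNIV_Plus sum_distrib_left sum_subtractf sum_negf mat_def)
  have x1: "x $ Inl a = e $ a" "x $ Inr (Inl a) = - y $ a" "x $ Inr (Inr (Inl a)) = v $ a"
     "x $ Inr (Inr (Inr (Inl a'))) = z $ a'" "x $ Inr (Inr (Inr (Inr (Inl p)))) = 0"
     "x $ Inr (Inr (Inr (Inr (Inr q)))) = 0" for a a' p q
    unfolding x_def by simp_all
  have "0 \<le> x \<bullet> (M *v x)" using psd unfolding psd_def M_def by blast
  also have "x \<bullet> (M *v x) = e \<bullet> (b *s (P *v e) - (transpose F ** P) *v y)
     - y \<bullet> ((P ** F) *v e - P *v y + P *v v - (P ** L ** Sh) *v z)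
     + v \<bullet> (- (P *v y) + c *s v) + z \<bullet> ((Sh ** transpose L ** P) *v y + c *s z)"
    unfolding inner_vec_def 
    by (simp add: sum_UNIV_Plus b1 b2 b3 b4 x1 sum_negf)
  finally have Q: "0 \<le> e \<bullet> (b *s (P *v e) - (transpose F ** P) *v y)
     - y \<bullet> ((P ** F) *v e - P *v y + P *v v - (P ** L ** Sh) *v z)
     + v \<bullet> (- (P *v y) + c *s v) + z \<bullet> ((Sh ** transpose L ** P) *v y + c *s z)" .
  have t1: "e \<bullet> ((transpose F ** P) *v y) = (F *v e) \<bullet> (P *v y)"
    by (simp add: matrix_vector_mul_assoc[symmetric] dotT del: transpose_matrix_vector)
  have t2: "y \<bullet> ((P ** F) *v e) = (P *v y) \<bullet> (F *v e)"
    by (simp add: matrix_vector_mul_assoc[symmetric] dotT PT del: transpose_matrix_vector)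
  have t3: "y \<bullet> ((P ** L ** Sh) *v z) = (P *v y) \<bullet> ((L ** Sh) *v z)"
    by (simp add: matrix_vector_mul_assoc[symmetric] dotT PT del: transpose_matrix_vector)
  have t4: "z \<bullet> ((Sh ** transpose L ** P) *v y) = ((L ** Sh) *v z) \<bullet> (P *v y)"
    by (simp add: matrix_vector_mul_assoc[symmetric] dotT ShT del: transpose_matrix_vector)
  have t5: "y \<bullet> (P *v v) = (P *v y) \<bullet> v"
    by (simp add: dotT PT del: transpose_matrix_vector)
  have t6: "y \<bullet> (P *v y) = (P *v y) \<bullet> (F *v e) - (P *v y) \<bullet> ((L ** Sh) *v z) + (P *v y) \<bullet> v"
  proof -
    define u where "u = P *v y"
    have "y \<bullet> u = u \<bullet> y" by (rule inner_commute)
    also have "\<dots> = u \<bullet> (F *v e) - u \<bullet> ((L ** Sh) *v z) + u \<bullet> v"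
      unfolding y_def by (simp add: inner_add_right inner_diff_right)
    finally show ?thesis unfolding u_def .
  qed
  have "0 \<le> b * (e \<bullet> (P *v e)) - y \<bullet> (P *v y) + c * (v \<bullet> v + z \<bullet> z)"
    using Q t1 t2 t3 t4 t5 t6
    by (simp add: inner_add_right inner_diff_right inner_commute algebra_simps scalar_mult_eq_scaleR)
  then show ?thesis unfolding y_def[symmetric] c_def by linarith
qed
theorem theorem1:
  fixes F :: "real^'n^'n" and L :: "real^'m^'n" and Sigma Sh :: "real^'m^'m"
    and P :: "real^'n^'n" and b alpha vbar :: real
    and e v :: "nat \<Rightarrow> real^'n" and zeta :: "nat \<Rightarrow> real^'m"
  assumes "posdef Sigma"
    and "transpose Sh = Sh" and "Sh ** Sh = Sigma"
    and "alpha > 0" and "vbar > 0"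
    and "posdef P" and "0 < b" and "b < 1"
    and "psd (lmi_mat F L Sh P b (alpha + vbar)
               :: real^('n + 'n + 'n + 'm + 'p::finite + 'q::finite)^('n + 'n + 'n + 'm + 'p + 'q))"
    and "e 1 = 0"
    and "\<forall>k\<ge>1. e (Suc k) = F *v e k - (L ** Sh) *v zeta k + v k"
    and "\<forall>k\<ge>1. (norm (zeta k))\<^sup>2 \<le> alpha"
    and "\<forall>k\<ge>1. (norm (v k))\<^sup>2 \<le> vbar"
  shows "\<forall>k\<ge>1. e k \<bullet> (P *v e k) \<le> 1"
proof (intro allI impI)
  fix k :: nat assume k: "k \<ge> 1"
  have PT: "transpose P = P" using assms(6) unfolding posdef_def by blast
  have c0: "0 \<le> (1 - b) / (alpha + vbar)" using assms(4,5,8) by simp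
  show "e k \<bullet> (P *v e k) \<le> 1" using k
  proof (induct k rule: nat_induct_at_least)
    case base then show ?case using assms(10) by simp
  next
    case (Suc n)
    have st: "e (Suc n) \<bullet> (P *v e (Suc n)) \<le> b * (e n \<bullet> (P *v e n))
        + (1 - b) / (alpha + vbar) * (v n \<bullet> v n + zeta n \<bullet> zeta n)"
      using step[OF assms(9) PT assms(2), of "e n" "zeta n" "v n"] assms(11) Suc(1) by simp
    have "v n \<bullet> v n + zeta n \<bullet> zeta n \<le> alpha + vbar"
      proof -
      have "zeta n \<bullet> zeta n \<le> alpha" "v n \<bullet> v n \<le> vbar"
        using assms(12,13) Suc(1) by (simp_all add: power2_norm_eq_inner)
      then show ?thesis by linarith
    qed
    then have "(1 - b) / (alpha + vbar) * (v n \<bullet> v n + zeta n \<bullet> zeta n) \<le> (1 - b) / (alpha + vbar) * (alpha + vbar)"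
      using c0 by (metis mult_left_mono)
    also have "\<dots> = 1 - b" using assms(4,5) by simp
    finally have A: "(1 - b) / (alpha + vbar) * (v n \<bullet> v n + zeta n \<bullet> zeta n) \<le> 1 - b" .
    have B: "b * (e n \<bullet> (P *v e n)) \<le> b" using Suc(2) assms(7) by (simp add: mult_left_le)
    show ?case using st A B by linarith
  qed
qed

end
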